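(* Let $\mathbf U$ be a real $3\times3$ positive-definite symmetric matrix and $\hat{\mathbf e}$ a unit vector such that $\hat{\mathbf U}:=(-\mathbf I+2\hat{\mathbf e}\otimes\hat{\mathbf e})\mathbf U(-\mathbf I+2\hat{\mathbf e}\otimes\hat{\mathbf e})\neq\mathbf U$ and $\hat{\mathbf e}$ is, up to sign, the only unit vector with this property. Let $$\mathbf n_{II}=2\Big(\hat{\mathbf e}-\frac{\mathbf U^2\hat{\mathbf e}}{|\mathbf U\hat{\mathbf e}|^2}\Big),\qquad \mathbf a_{II}=\mathbf U\hat{\mathbf e},$$ and let $\hat{\mathbf R}\in\mathrm{SO}(3)$ satisfy $\hat{\mathbf R}\hat{\mathbf U}=\mathbf U+\mathbf a_{II}\otimes\mathbf n_{II}$, with $\mathbf n_{II}\neq0$. Suppose the cofactor conditions hold with $\mathbf a=\mathbf a_{II}$, $\mathbf n=\mathbf n_{II}$: (CC1) the middle eigenvalue of $\mathbf U$ is $1$; (CC2) $\mathbf a_{II}\cdot\mathbf U\,\mathrm{cof}(\mathbf U^2-\mathbf I)\mathbf n_{II}=0$; (CC3) $\mathrm{tr}\,\mathbf U^2-\det\mathbf U^2-\frac{|\mathbf a_{II}|^2|\mathbf n_{II}|^2}{4}-2\ge0$. For $f\in\{0,1\}$ let $(\mathbf R_f^\kappa,\mathbf b_f^\kappa\otimes\mathbf m_f^\kappa)$, $\kappa\in\{\pm1\}$, be the two distinct solutions $\mathbf R\in\mathrm{SO}(3)$, $\mathbf b,\mathbf m\in\mathbb R^3$ of $\mathbf R(\mathbf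 U+f\,\mathbf a_{II}\otimes\mathbf n_{II})=\mathbf I+\mathbf b\otimes\mathbf m$. Then there are $\sigma,\sigma_*\in\{\pm1\}$ such that $\mathbf R_1^{\sigma_*}=\mathbf R_0^\sigma$ and $\mathbf m_1^{\sigma_*}=\xi\,\mathbf m_0^\sigma$ for some $\xi\neq0$, so that $$\mathbf R_0^\sigma\mathbf U=\mathbf I+\mathbf b_0^\sigma\otimes\mathbf m_0^\sigma,\qquad \mathbf R_0^\sigma(\mathbf U+\mathbf a_{II}\otimes\mathbf n_{II})=\mathbf I+\xi\mathbf b_1^{\sigma_*}\otimes\mathbf m_0^\sigma,$$ and consequently, for all $0\le f\le1$, $$\mathbf R_0^\sigma[\mathbf U+f\,\mathbf a_{II}\otimes\mathbf n_{II}]=\mathbf I+\big(f\xi\mathbf b_1^{\sigma_*}+(1-f)\mathbf b_0^\sigma\big)\otimes\mathbf m_0^\sigma.$$ In particular the normal $\mathbf m_0^\sigma$ is independent of $f$, and $\mathbf n_{II}=c\,\mathbf m_0^\sigma$ for some $c\neq0$.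
   Context: $\mathbf a\otimes\mathbf n$ is the matrix $\mathbf x\mapsto(\mathbf n\cdot\mathbf x)\mathbf a$; $\mathrm{cof}\,\mathbf A$ is the cofactor matrix of $\mathbf A$. Under the stated hypotheses, for $f\in\{0,1\}$ the equation $\mathbf R(\mathbf U+f\,\mathbf a_{II}\otimes\mathbf n_{II})=\mathbf I+\mathbf b\otimes\mathbf m$ has exactly two distinct solutions $(\mathbf R,\mathbf b\otimes\mathbf m)$, labeled by $\kappa=\pm1$. *)

theory Defs
  imports "HOL-Analysis.Analysis"
begin

definition tens :: "real^3 \<Rightarrow> real^3 \<Rightarrow> real^3^3" where
  "tens a n = (\<chi> i j. a $ i * n $ j)"

text \<open>Cofactor matrix of a 3x3 matrix (cyclic index formula, valid also for singular matrices).\<close>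
definition cof :: "real^3^3 \<Rightarrow> real^3^3" where
  "cof A = (\<chi> i j. A $ (i+1) $ (j+1) * A $ (i+2) $ (j+2) - A $ (i+1) $ (j+2) * A $ (i+2) $ (j+1))"

definition SO3 :: "(real^3^3) set" where
  "SO3 = {R. orthogonal_matrix R \<and> det R = 1}"

definition sym_pos_def :: "real^3^3 \<Rightarrow> bool" where
  "sym_pos_def U \<longleftrightarrow> transpose U = U \<and> (\<forall>x. x \<noteq> 0 \<longrightarrow> x \<bullet> (U *v x) > 0)"

definition ordered_eigenvalues :: "real^3^3 \<Rightarrow> real \<Rightarrow> real \<Rightarrow> real \<Rightarrow> bool" where
  "ordered_eigenvalues A l1 l2 l3 \<longleftrightarrow> l1 \<le> l2 \<and> l2 \<le> l3 \<and>
     (\<forall>t. det (mat t - A) = (t - l1) * (t - l2) * (t - l3))"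

definition middle_eigenvalue :: "real^3^3 \<Rightarrow> real" where
  "middle_eigenvalue A = (THE l2. \<exists>l1 l3. ordered_eigenvalues A l1 l2 l3)"

definition rot180 :: "real^3 \<Rightarrow> real^3^3" where
  "rot180 e = - mat 1 + 2 *\<^sub>R tens e e"

end

theory Submission imports Defs begin

definition cr :: "real^3 \<Rightarrow> real^3 \<Rightarrow> real^3" where
  "cr x y = vector [x$2*y$3 - x$3*y$2, x$3*y$1 - x$1*y$3, x$1*y$2 - x$2*y$1]"

lemma cr_comp: "cr x y $ 1 = x$2*y$3 - x$3*y$2" "cr x y $ 2 = x$3*y$1 - x$1*y$3" "cr x y $ 3 = x$1*y$2 - x$2*y$1"
  by (simp_all add: cr_def vector_def)

lemma idx3: "(1::3) + 1 = 2" "(1::3)+2 = 3" "(2::3)+1 = 3" "(2::3)+2 = 1" "(3::3)+1 = 1" "(3::3)+2 = 2"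
  by simp_all
lemma idx45: "(4::3) = 1" "(5::3) = 2" "(6::3) = 3" by simp_all

lemmas vsimps = vec_eq_iff forall_3 sum_3 inner_vec_def matrix_matrix_mult_def matrix_vector_mult_def
   tens_def transpose_def mat_def

lemma cr_orth: "x \<bullet> cr x y = 0" "y \<bullet> cr x y = 0"
  by (simp_all add: vsimps cr_comp algebra_simps)
lemma cr_norm: "cr x y \<bullet> cr x y = (x \<bullet> x) * (y \<bullet> y) - (x \<bullet> y)^2"
  by (simp add: vsimps cr_comp power2_eq_square algebra_simps)
lemma cr_skew: "cr y x = - cr x y"
  by (simp add: vsimps cr_comp algebra_simps)
lemma cr_tens: "tens (cr x y) (cr x y) = ((x \<bullet> x) * (y \<bullet> y) - (x \<bullet> y)^2) *\<^sub>R mat 1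
   - (y \<bullet> y) *\<^sub>R tens x x - (x \<bullet> x) *\<^sub>R tens y y + (x \<bullet> y) *\<^sub>R (tens x y + tens y x)"
  by (simp add: vsimps cr_comp power2_eq_square algebra_simps)
lemma rot_mul: "rot180 x ** rot180 y = mat 1 - 2 *\<^sub>R tens x x - 2 *\<^sub>R tens y y + (4 * (x \<bullet> y)) *\<^sub>R tens x y"
  by (simp add: rot180_def vsimps algebra_simps)
lemma rot_conj: "rot180 w ** U ** rot180 w = U - 2 *\<^sub>R tens (U *v w) w - 2 *\<^sub>R tens w (transpose U *v w)
   + (4 * (w \<bullet> (U *v w))) *\<^sub>R tens w w"
  by (simp add: rot180_def vsimps algebra_simps)
lemma I_tens_mul: "(mat 1 + tens a b) ** (mat 1 + tens c d) = mat 1 + tens a b + tens c d + (b \<bullet> c) *\<^sub>R tens a d"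
  by (simp add: vsimps algebra_simps)
lemma trace_sym2: "trace (mat 1 + tens m c + tens c m) = 3 + 2 * (m \<bullet> c)"
  by (simp add: trace_def vsimps algebra_simps)

lemma tens_mv: "tens a b *v x = (b \<bullet> x) *\<^sub>R a"
  by (simp add: vsimps algebra_simps)
lemma mat_tens: "M ** tens a b = tens (M *v a) b"
  by (simp add: vsimps algebra_simps)
lemma transpose_tens: "transpose (tens a b) = tens b a"
  by (simp add: vsimps algebra_simps)
lemma tens_add1: "tens (a + a') b = tens a b + tens a' b"
  by (simp add: vsimps algebra_simps)
lemma tens_add2: "tens a (b + b') = tens a b + tens a b'"
  by (simp add: vsimps algebra_simps)
lemma tens_scale1: "tens (k *\<^sub>R a) b = k *\<^sub>R tens a b"
  by (simp add: vsimps algebra_simps)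
lemma tens_scale2: "tens a (k *\<^sub>R b) = k *\<^sub>R tens a b"
  by (simp add: vsimps algebra_simps)
lemma det_I_tens: "det (mat 1 + tens a b) = 1 + a \<bullet> b"
  by (simp add: det_3 vsimps algebra_simps)
lemma cof_sym2: "cof (tens m c + tens c m) = - tens (cr m c) (cr m c)"
  by (simp add: cof_def vsimps cr_comp idx3 idx45 algebra_simps)
lemma rot_T: "transpose (rot180 e) = rot180 e"
  by (simp add: rot180_def vsimps)
lemma inner_T: "(U *v x) \<bullet> y = x \<bullet> (transpose U *v y)" for U :: "real^3^3"
  by (simp add: vsimps inner_real_def algebra_simps del: transpose_matrix_vector)
lemma inner_sym: "transpose U = U \<Longrightarrow> (U *v x) \<bullet> y = x \<bullet> (U *v y)" for U :: "real^3^3"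
  by (metis inner_T)

lemma rot_sq: "norm e = 1 \<Longrightarrow> rot180 e ** rot180 e = mat 1"
proof -
  assume "norm e = 1"
  then have "e \<bullet> e = 1" by (simp add: norm_eq_1)
  then have "rot180 e ** rot180 e = mat 1 - 2 *\<^sub>R tens e e - 2 *\<^sub>R tens e e + 4 *\<^sub>R tens e e"
    using rot_mul[of e e] by simp
  also have "\<dots> = mat 1" by (simp add: vec_eq_iff algebra_simps)
  finally show ?thesis .
qed

lemma frame:
  assumes "x \<bullet> x = 1" "y \<bullet> y = 1" "x \<bullet> y = 0"
  shows "rot180 x ** rot180 y = rot180 (cr x y)"
proof -
  have "tens (cr x y) (cr x y) = mat 1 - tens x x - tens y y"
    using cr_tens[of x y] assms by (simp add: algebra_simps)
  then have "rot180 (cr x y) = - mat 1 + 2 *\<^sub>R (mat 1 - tens x x - tens y y)"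
    by (simp add: rot180_def)
  also have "\<dots> = mat 1 - 2 *\<^sub>R tens x x - 2 *\<^sub>R tens y y"
    by (simp add: vec_eq_iff mat_def algebra_simps)
  also have "\<dots> = rot180 x ** rot180 y" using rot_mul[of x y] assms by simp
  finally show ?thesis by simp
qed

lemma posdef_fix:
  assumes U: "sym_pos_def U" and w: "U *v (U *v w) = w" shows "U *v w = w"
proof (rule ccontr)
  define v where "v = U *v w - w"
  assume "U *v w \<noteq> w"
  then have "v \<noteq> 0" by (simp add: v_def)
  then have pos: "v \<bullet> (U *v v) > 0" using U by (simp add: sym_pos_def_def)
  have "U *v v = U *v (U *v w) - U *v w" by (simp add: v_def matrix_vector_mult_diff_distrib)
  then have "U *v v = - v" using w by (simp add: v_def)
  then have "v \<bullet> (U *v v) = - (v \<bullet> v)" by simp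
  then show False using pos inner_ge_zero[of v] by linarith
qed

lemma posdef_orth:
  assumes U: "sym_pos_def U" and "U ** U = mat 1" shows "U = mat 1"
proof -
  have "\<And>w. U *v w = mat 1 *v w"
    using posdef_fix[OF U] assms(2) by (simp add: matrix_vector_mul_assoc)
  then show ?thesis by (rule matrix_eq[THEN iffD2, rule_format])
qed

lemma SO3_inv_I:
  assumes U: "sym_pos_def U" and Q: "orthogonal_matrix Q" and QU: "Q ** U = mat 1" shows "U = mat 1"
proof -
  have QtQ: "transpose Q ** Q = mat 1" using Q by (simp add: orthogonal_matrix_def)
  have "U = transpose Q ** (Q ** U)" using QtQ by (simp add: matrix_mul_assoc)
  then have UQ: "U = transpose Q" using QU by simp
  have Ut: "transpose U = U" using U by (simp add: sym_pos_def_def)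
  have QU': "Q = transpose U" using UQ by simp
  then have "Q = U" using Ut by simp
  then have "transpose Q ** Q = transpose U ** U" by simp
  then have "U ** U = transpose Q ** Q" using Ut by simp
  then show ?thesis using posdef_orth[OF U] QtQ by simp
qed

lemma rot_neg: "rot180 (- x) = rot180 x"
  by (simp add: rot180_def vsimps)

lemma other_axis:
  fixes U :: "real^3^3"
  assumes Ut: "transpose U = U" and e: "norm e = 1" and Uw: "U *v w = w" and w0: "w \<noteq> 0"
    and ew: "e \<bullet> w = 0"
  shows "\<exists>e'. norm e' = 1 \<and> rot180 e' ** U ** rot180 e' = rot180 e ** U ** rot180 e \<and> e' \<noteq> e \<and> e' \<noteq> -e"
proof -
  define u where "u = (1/norm w) *\<^sub>R w"
  have "norm u = 1" using w0 by (simp add: u_def)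
  then have uu: "u \<bullet> u = 1" by (simp add: norm_eq_1)
  have ee: "e \<bullet> e = 1" using e by (simp add: norm_eq_1)
  have eu: "e \<bullet> u = 0" using ew by (simp add: u_def)
  have Uu: "U *v u = u" using Uw by (simp add: u_def matrix_vector_mult_scaleR)
  define e' where "e' = cr e u"
  have e'e': "e' \<bullet> e' = 1" using cr_norm[of e u] ee uu eu by (simp add: e'_def)
  then have ne': "norm e' = 1" by (simp add: norm_eq_1)
  have e'e: "e \<bullet> e' = 0" by (simp add: e'_def cr_orth)
  have Q1: "rot180 e ** rot180 u = rot180 e'" using frame[OF ee uu eu] by (simp add: e'_def)
  have "u \<bullet> e = 0" using eu by (simp add: inner_commute)
  then have Q2: "rot180 u ** rot180 e = rot180 e'" using frame[OF uu ee] cr_skew[of e u] by (simp add: e'_def rot_neg)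
  have "rot180 u ** U ** rot180 u = U - 2 *\<^sub>R tens u u - 2 *\<^sub>R tens u u + 4 *\<^sub>R tens u u"
    using rot_conj[of u U] Uu Ut uu by simp
  also have "\<dots> = U" by (simp add: vec_eq_iff algebra_simps)
  finally have DUD: "rot180 u ** U ** rot180 u = U" .
  have "rot180 e' ** U ** rot180 e' = (rot180 e ** rot180 u) ** U ** (rot180 u ** rot180 e)"
    using Q1 Q2 by simp
  also have "\<dots> = rot180 e ** (rot180 u ** U ** rot180 u) ** rot180 e"
    by (simp add: matrix_mul_assoc)
  also have "\<dots> = rot180 e ** U ** rot180 e" using DUD by simp
  finally have conj: "rot180 e' ** U ** rot180 e' = rot180 e ** U ** rot180 e" .
  have "e' \<noteq> e" using e'e ee by auto
  moreover have "e' \<noteq> - e" using e'e ee by auto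
  ultimately show ?thesis using ne' conj by blast
qed

lemma construct:
  fixes U :: "real^3^3"
  assumes Ut: "transpose U = U" and dU: "det U \<noteq> 0"
    and C: "U ** U = mat 1 + tens p q + tens q p" and q: "q \<noteq> 0"
    and D: "(1 + p \<bullet> q)^2 - (p \<bullet> p) * (q \<bullet> q) = (det U)^2"
  shows "\<exists>R d. R \<in> SO3 \<and> R ** U = mat 1 + tens d q"
proof -
  define K where "K = 1 + p \<bullet> q"
  define l where "l = (K - det U) / (q \<bullet> q)"
  define d where "d = p - l *\<^sub>R q"
  have qq: "q \<bullet> q \<noteq> 0" using q by simp
  have lq: "l * (q \<bullet> q) = K - det U" using qq by (simp add: l_def)
  have dq: "1 + d \<bullet> q = det U"
    using lq by (simp add: d_def K_def inner_diff_left algebra_simps)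
  have dd1: "(q \<bullet> q) * (d \<bullet> d) = (q \<bullet> q) * (p \<bullet> p) - 2 * (p \<bullet> q) * (l * (q \<bullet> q)) + (l * (q \<bullet> q))^2"
    by (simp add: d_def inner_diff_left inner_diff_right inner_commute power2_eq_square algebra_simps)
  also have "\<dots> = (q \<bullet> q) * (p \<bullet> p) - 2 * (p \<bullet> q) * (K - det U) + (K - det U)^2"
    by (simp only: lq)
  also have "\<dots> = 2 * (K - det U)" using D unfolding K_def by algebra
  also have "\<dots> = (q \<bullet> q) * (2 * l)" using lq by (simp add: algebra_simps)
  finally have dd: "d \<bullet> d = 2 * l" using qq by simp
  obtain B where B: "B ** U = mat 1" using dU invertible_det_nz invertible_left_inverse by blast
  then have UB: "U ** B = mat 1" using matrix_left_right_inverse by blast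
  define R where "R = (mat 1 + tens d q) ** B"
  have RU: "R ** U = mat 1 + tens d q" by (simp add: R_def B flip: matrix_mul_assoc)
  have T: "transpose (mat 1 + tens d q) = mat 1 + tens q d" by (simp add: vsimps)
  have "tens q d + tens d q + (2 * l) *\<^sub>R tens q q = tens p q + tens q p"
    by (simp add: d_def vsimps algebra_simps)
  then have M: "transpose (mat 1 + tens d q) ** (mat 1 + tens d q) = U ** U"
    unfolding T I_tens_mul C dd by (simp add: inner_commute algebra_simps)
  have "transpose R ** R = transpose B ** (transpose (mat 1 + tens d q) ** (mat 1 + tens d q)) ** B"
    by (simp add: R_def matrix_transpose_mul matrix_mul_assoc)
  also have "\<dots> = transpose B ** U ** (U ** B)" unfolding M by (simp add: matrix_mul_assoc)
  also have "\<dots> = transpose (transpose U ** B)" using UB by (simp add: matrix_transpose_mul)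
  also have "\<dots> = mat 1" using UB Ut by simp
  finally have oR: "orthogonal_matrix R" by (simp add: orthogonal_matrix)
  have "det B * det U = 1" using B det_mul[of B U] by simp
  then have "det R = 1" using dq by (simp add: R_def det_mul det_I_tens inner_commute algebra_simps)
  then show ?thesis using oR RU by (auto simp: SO3_def)
qed

lemma mat_neg_tens: "U ** (- tens a b) = - tens (U *v a) b"
  by (simp add: vsimps algebra_simps)
lemma tens_zero[simp]: "tens 0 q = 0" "tens q 0 = 0"
  by (simp_all add: vsimps)
lemma neg_mv: "(- M) *v x = - (M *v x)" for M :: "real^3^3"
  by (simp add: vsimps)
lemma mul_add_scale: "R ** (U + f *\<^sub>R T) = R ** U + f *\<^sub>R (R ** T)" for R U T :: "real^3^3"
  by (simp add: vsimps algebra_simps)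
lemma mul_add: "R ** (U + T) = R ** U + R ** T" for R U T :: "real^3^3"
  by (simp add: matrix_add_ldistrib)

lemma tens_par:
  assumes "tens x y = tens u v" "x \<noteq> 0" "y \<noteq> 0"
  shows "\<exists>t. t \<noteq> 0 \<and> v = t *\<^sub>R y"
proof -
  have "transpose (tens x y) *v x = transpose (tens u v) *v x" using assms(1) by simp
  then have eq: "(x \<bullet> x) *\<^sub>R y = (u \<bullet> x) *\<^sub>R v"
    by (simp only: transpose_tens tens_mv)
  have xx: "x \<bullet> x \<noteq> 0" using assms(2) by simp
  have ux: "u \<bullet> x \<noteq> 0"
  proof
    assume "u \<bullet> x = 0"
    then have "(x \<bullet> x) *\<^sub>R y = 0" using eq by simp
    then show False using xx assms(3) by simp
  qed
  have "v = (1/(u \<bullet> x)) *\<^sub>R ((u \<bullet> x) *\<^sub>R v)" using ux by simp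
  also have "\<dots> = (1/(u \<bullet> x)) *\<^sub>R ((x \<bullet> x) *\<^sub>R y)" using eq by simp
  also have "\<dots> = ((x \<bullet> x) / (u \<bullet> x)) *\<^sub>R y" by simp
  finally have "v = ((x \<bullet> x) / (u \<bullet> x)) *\<^sub>R y" .
  then show ?thesis using xx ux by (intro exI[of _ "(x \<bullet> x) / (u \<bullet> x)"]) simp
qed
theorem theorem3:
  fixes U :: "real^3^3" and e :: "real^3" and Rhat :: "real^3^3"
    and R :: "nat \<Rightarrow> int \<Rightarrow> real^3^3" and b m :: "nat \<Rightarrow> int \<Rightarrow> real^3"
  defines "Uhat \<equiv> rot180 e ** U ** rot180 e"
  defines "nII \<equiv> 2 *\<^sub>R (e - (1 / (norm (U *v e))\<^sup>2) *\<^sub>R ((U ** U) *v e))"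
  defines "aII \<equiv> U *v e"
  assumes U: "sym_pos_def U"
    and e_unit: "norm e = 1"
    and twin: "Uhat \<noteq> U"
    and e_unique: "\<forall>e'. norm e' = 1 \<and> rot180 e' ** U ** rot180 e' = Uhat \<longrightarrow> e' = e \<or> e' = - e"
    and Rhat: "Rhat \<in> SO3" "Rhat ** Uhat = U + tens aII nII"
    and nII_nz: "nII \<noteq> 0"
    and CC1: "middle_eigenvalue U = 1"
    and CC2: "aII \<bullet> ((U ** cof (U ** U - mat 1)) *v nII) = 0"
    and CC3: "trace (U ** U) - det (U ** U) - (norm aII)\<^sup>2 * (norm nII)\<^sup>2 / 4 - 2 \<ge> 0"
    and sols: "\<forall>f\<in>{0,1}. \<forall>\<kappa>\<in>{1,-1}.
                 R f \<kappa> \<in> SO3 \<and> R f \<kappa> ** (U + real f *\<^sub>R tens aII nII) = mat 1 + tens (b f \<kappa>) (m f \<kappa>)"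
    and distinct: "\<forall>f\<in>{0,1}. (R f 1, tens (b f 1) (m f 1)) \<noteq> (R f (-1), tens (b f (-1)) (m f (-1)))"
    and all_sols: "\<forall>f\<in>{0,1}. \<forall>Q c d. Q \<in> SO3 \<and> Q ** (U + real f *\<^sub>R tens aII nII) = mat 1 + tens c d
                     \<longrightarrow> (\<exists>\<kappa>\<in>{1,-1}. Q = R f \<kappa> \<and> tens c d = tens (b f \<kappa>) (m f \<kappa>))"
  shows "\<exists>\<sigma>\<in>{1,-1}. \<exists>\<sigma>s\<in>{1,-1}. \<exists>\<xi>. \<xi> \<noteq> 0 \<and>
           R 1 \<sigma>s = R 0 \<sigma> \<and> m 1 \<sigma>s = \<xi> *\<^sub>R m 0 \<sigma> \<and>
           R 0 \<sigma> ** U = mat 1 + tens (b 0 \<sigma>) (m 0 \<sigma>) \<and>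
           R 0 \<sigma> ** (U + tens aII nII) = mat 1 + tens (\<xi> *\<^sub>R b 1 \<sigma>s) (m 0 \<sigma>) \<and>
           (\<forall>f::real. 0 \<le> f \<and> f \<le> 1 \<longrightarrow>
              R 0 \<sigma> ** (U + f *\<^sub>R tens aII nII)
                = mat 1 + tens ((f * \<xi>) *\<^sub>R b 1 \<sigma>s + (1 - f) *\<^sub>R b 0 \<sigma>) (m 0 \<sigma>)) \<and>
           (\<exists>c. c \<noteq> 0 \<and> nII = c *\<^sub>R m 0 \<sigma>)"
proof -
  have Ut: "transpose U = U" using U by (simp add: sym_pos_def_def)
  have pd: "\<And>x. x \<noteq> 0 \<Longrightarrow> x \<bullet> (U *v x) > 0" using U by (simp add: sym_pos_def_def)
  have ee: "e \<bullet> e = 1" using e_unit by (simp add: norm_eq_1)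
  have Uhat_I: "U = mat 1 \<Longrightarrow> Uhat = mat 1" using rot_sq[OF e_unit] by (simp add: Uhat_def)
  have U_nI: "U \<noteq> mat 1" using twin Uhat_I by auto
  define R0 where "R0 = R 0 1"
  define b0 where "b0 = b 0 1"
  define m0 where "m0 = m 0 1"
  have s01: "R0 \<in> SO3" "R0 ** U = mat 1 + tens b0 m0"
    using sols by (auto simp: R0_def b0_def m0_def)
  have oR0: "transpose R0 ** R0 = mat 1" "det R0 = 1"
    using s01(1) by (auto simp: SO3_def orthogonal_matrix_def)
  define c where "c = b0 + ((b0 \<bullet> b0) / 2) *\<^sub>R m0"
  have "U ** U = transpose U ** (transpose R0 ** R0) ** U" using Ut oR0 by simp
  also have "\<dots> = transpose (R0 ** U) ** (R0 ** U)"
    by (simp add: matrix_transpose_mul matrix_mul_assoc)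
  also have "\<dots> = (mat 1 + tens m0 b0) ** (mat 1 + tens b0 m0)"
    using s01(2) by (simp add: transpose_tens vsimps)
  also have "\<dots> = mat 1 + tens m0 c + tens c m0"
    unfolding I_tens_mul by (simp add: c_def vsimps algebra_simps)
  finally have C: "U ** U = mat 1 + tens m0 c + tens c m0" .
  have detU: "det U = 1 + b0 \<bullet> m0"
    using arg_cong[OF s01(2), of det] oR0 by (simp add: det_mul det_I_tens)
  have dU: "det U \<noteq> 0"
  proof
    assume "det U = 0"
    then have "\<not> inj ((*v) U)"
      using invertible_det_nz invertible_left_inverse matrix_left_invertible_injective by blast
    then obtain x y where xy: "U *v x = U *v y" "x \<noteq> y" unfolding inj_def by blast
    then have "U *v (x - y) = 0" by (simp add: matrix_vector_mult_diff_distrib)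
    then show False using pd[of "x - y"] xy(2) by simp
  qed
  have D: "(1 + m0 \<bullet> c)^2 - (m0 \<bullet> m0) * (c \<bullet> c) = (det U)^2"
    unfolding detU c_def by (simp add: inner_add_left inner_add_right inner_commute power2_eq_square algebra_simps)
  define w where "w = cr m0 c"
  have ww: "w \<bullet> w = (m0 \<bullet> m0) * (c \<bullet> c) - (m0 \<bullet> c)^2" by (simp add: w_def cr_norm)
  have trC: "trace (U ** U) = 3 + 2 * (m0 \<bullet> c)" by (simp add: C trace_sym2)
  have detC: "det (U ** U) = (det U)^2" by (simp add: det_mul power2_eq_square)
  have a_nz: "aII \<noteq> 0"
  proof
    assume "aII = 0"
    then have "e \<bullet> (U *v e) = 0" by (simp add: aII_def)
    moreover have "e \<noteq> 0" using e_unit by auto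
    ultimately show False using pd by fastforce
  qed
  have "(norm aII)^2 * (norm nII)^2 / 4 > 0" using a_nz nII_nz by simp
  moreover have "w \<bullet> w \<ge> (norm aII)^2 * (norm nII)^2 / 4"
    using CC3 trC detC D ww by (simp add: power2_eq_square algebra_simps)
  ultimately have w_nz: "w \<noteq> 0" by auto
  have mw: "m0 \<bullet> w = 0" and cw: "c \<bullet> w = 0" by (simp_all add: w_def cr_orth)
  have "(U ** U) *v w = w" using mw cw
    by (simp add: C matrix_vector_mult_add_rdistrib tens_mv)
  then have Uw: "U *v w = w" using posdef_fix[OF U] by (simp add: matrix_vector_mul_assoc)
  have ew_nz: "e \<bullet> w \<noteq> 0"
  proof
    assume "e \<bullet> w = 0"
    then obtain e' where e': "norm e' = 1" "rot180 e' ** U ** rot180 e' = Uhat" "e' \<noteq> e" "e' \<noteq> -e"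
      using other_axis[OF Ut e_unit Uw w_nz] by (auto simp: Uhat_def)
    then show False using e_unique by blast
  qed
  define s where "s = (norm (U *v e))^2"
  have s_eq: "s = e \<bullet> ((U ** U) *v e)"
    by (simp add: s_def power2_norm_eq_inner inner_sym[OF Ut] matrix_vector_mul_assoc)
  have spos: "s > 0" using a_nz by (simp add: s_def aII_def)
  have nII_eq: "nII = 2 *\<^sub>R (e - (1 / s) *\<^sub>R ((U ** U) *v e))" by (simp add: nII_def s_def)
  have wCe: "w \<bullet> ((U ** U) *v e) = e \<bullet> w"
  proof -
    have "w \<bullet> ((U ** U) *v e) = w \<bullet> (U *v (U *v e))" by (simp add: matrix_vector_mul_assoc)
    also have "\<dots> = (U *v w) \<bullet> (U *v e)" by (simp add: inner_sym[OF Ut])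
    also have "\<dots> = w \<bullet> (U *v e)" using Uw by simp
    also have "\<dots> = (U *v w) \<bullet> e" by (simp add: inner_sym[OF Ut])
    also have "\<dots> = e \<bullet> w" using Uw by (simp add: inner_commute)
    finally show ?thesis .
  qed
  have wn: "w \<bullet> nII = 2 * (e \<bullet> w) * (1 - 1 / s)"
    unfolding nII_eq using wCe by (simp add: inner_diff_right inner_commute algebra_simps)
  have UAm: "U ** U - mat 1 = tens m0 c + tens c m0" using C by simp
  have "aII \<bullet> ((U ** cof (U ** U - mat 1)) *v nII) = - ((w \<bullet> nII) * (aII \<bullet> w))"
    unfolding UAm cof_sym2 mat_neg_tens by (simp add: w_def[symmetric] Uw tens_mv neg_mv)
  also have "aII \<bullet> w = e \<bullet> w" using Uw by (simp add: aII_def inner_sym[OF Ut])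
  finally have X: "aII \<bullet> ((U ** cof (U ** U - mat 1)) *v nII) = - ((w \<bullet> nII) * (e \<bullet> w))" .
  then have "(w \<bullet> nII) * (e \<bullet> w) = 0" using CC2 by simp
  then have "w \<bullet> nII = 0" using ew_nz by simp
  then have "2 * (e \<bullet> w) * (1 - 1 / s) = 0" using wn by simp
  then have "1 - 1 / s = 0" using ew_nz by simp
  then have s1: "s = 1" using spos by (simp add: field_simps)
  have Ce: "(U ** U) *v e = e + (c \<bullet> e) *\<^sub>R m0 + (m0 \<bullet> e) *\<^sub>R c"
    by (simp add: C matrix_vector_mult_add_rdistrib tens_mv)
  have "s = 1 + 2 * (m0 \<bullet> e) * (c \<bullet> e)"
    unfolding s_eq Ce using ee by (simp add: inner_add_right inner_commute algebra_simps)
  then have mece: "(m0 \<bullet> e) * (c \<bullet> e) = 0" using s1 by simp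
  have n_eq: "nII = (-2 * (c \<bullet> e)) *\<^sub>R m0 + (-2 * (m0 \<bullet> e)) *\<^sub>R c"
    unfolding nII_eq s1 Ce by (simp add: algebra_simps)
  obtain p q k where pq: "U ** U = mat 1 + tens p q + tens q p"
      "(1 + p \<bullet> q)^2 - (p \<bullet> p) * (q \<bullet> q) = (det U)^2" "nII = k *\<^sub>R q" "k \<noteq> 0" "q \<noteq> 0"
  proof (cases "m0 \<bullet> e = 0")
    case True
    then have "nII = (-2 * (c \<bullet> e)) *\<^sub>R m0" using n_eq by simp
    moreover have "U ** U = mat 1 + tens c m0 + tens m0 c" using C by (simp add: algebra_simps)
    moreover have "(1 + c \<bullet> m0)^2 - (c \<bullet> c) * (m0 \<bullet> m0) = (det U)^2" using D by (simp add: inner_commute mult.commute)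
    ultimately show ?thesis using that nII_nz by (metis scaleR_zero_left scaleR_zero_right)
  next
    case False
    then have "c \<bullet> e = 0" using mece by simp
    then have "nII = (-2 * (m0 \<bullet> e)) *\<^sub>R c" using n_eq by simp
    then show ?thesis using that C D nII_nz by (metis scaleR_zero_left scaleR_zero_right)
  qed
  obtain R' d where R': "R' \<in> SO3" "R' ** U = mat 1 + tens d q"
    using construct[OF Ut dU pq(1) pq(5) pq(2)] by blast
  have oR': "orthogonal_matrix R'" using R'(1) by (simp add: SO3_def)
  obtain \<sigma> where sig: "\<sigma> \<in> {1, -1}" "R' = R 0 \<sigma>" "tens d q = tens (b 0 \<sigma>) (m 0 \<sigma>)"
  proof -
    have "R' ** (U + real (0::nat) *\<^sub>R tens aII nII) = mat 1 + tens d q" using R'(2) by simp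
    then have "\<exists>\<kappa>\<in>{1,-1}. R' = R 0 \<kappa> \<and> tens d q = tens (b 0 \<kappa>) (m 0 \<kappa>)"
      using all_sols[rule_format, of 0 R' d q] R'(1) by blast
    then show ?thesis using that by blast
  qed
  have d_nz: "d \<noteq> 0"
  proof
    assume "d = 0"
    then have "R' ** U = mat 1" using R' by simp
    then show False using SO3_inv_I[OF U oR'] U_nI by simp
  qed
  obtain t0 where t0: "t0 \<noteq> 0" "m 0 \<sigma> = t0 *\<^sub>R q" using tens_par[OF sig(3) d_nz pq(5)] by blast
  define u where "u = d + k *\<^sub>R (R' *v aII)"
  have R'1: "R' ** (U + tens aII nII) = mat 1 + tens u q"
    unfolding mul_add R'(2) mat_tens pq(3) u_def
    by (simp add: tens_add1 tens_scale1 tens_scale2 algebra_simps)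
  obtain \<sigma>s where sigs: "\<sigma>s \<in> {1, -1}" "R' = R 1 \<sigma>s" "tens u q = tens (b 1 \<sigma>s) (m 1 \<sigma>s)"
  proof -
    have "R' ** (U + real (1::nat) *\<^sub>R tens aII nII) = mat 1 + tens u q" using R'1 by simp
    then have "\<exists>\<kappa>\<in>{1,-1}. R' = R 1 \<kappa> \<and> tens u q = tens (b 1 \<kappa>) (m 1 \<kappa>)"
      using all_sols[rule_format, of 1 R' u q] R'(1) by blast
    then show ?thesis using that by blast
  qed
  have u_nz: "u \<noteq> 0"
  proof
    assume "u = 0"
    then have "R' ** (Rhat ** Uhat) = mat 1" using R'1 Rhat(2) by simp
    then have O1: "(R' ** Rhat) ** Uhat = mat 1" by (simp add: matrix_mul_assoc)
    define Om where "Om = R' ** Rhat"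
    have oO: "orthogonal_matrix Om"
      using oR' Rhat(1) by (simp add: Om_def SO3_def orthogonal_matrix_mul)
    have "Uhat = transpose Om ** (Om ** Uhat)"
      using oO by (simp add: orthogonal_matrix_def matrix_mul_assoc)
    then have UhO: "Uhat = transpose Om" using O1 by (simp add: Om_def)
    have rr: "rot180 e ** rot180 e = mat 1" using rot_sq[OF e_unit] .
    have "rot180 e ** Uhat ** rot180 e = (rot180 e ** rot180 e) ** U ** (rot180 e ** rot180 e)"
      by (simp add: Uhat_def matrix_mul_assoc)
    then have UU: "U = rot180 e ** transpose Om ** rot180 e" using rr UhO by simp
    have "transpose U ** U = rot180 e ** (Om ** (rot180 e ** rot180 e) ** transpose Om) ** rot180 e"
      unfolding UU by (simp add: matrix_transpose_mul rot_T matrix_mul_assoc)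
    also have "\<dots> = mat 1" using rr oO by (simp add: orthogonal_matrix_def)
    finally have "U ** U = mat 1" using Ut by simp
    then show False using posdef_orth[OF U] U_nI by simp
  qed
  obtain t1 where t1: "t1 \<noteq> 0" "m 1 \<sigma>s = t1 *\<^sub>R q" using tens_par[OF sigs(3) u_nz pq(5)] by blast
  define \<xi> where "\<xi> = t1 / t0"
  have xi: "\<xi> \<noteq> 0" using t0 t1 by (simp add: \<xi>_def)
  have m1: "m 1 \<sigma>s = \<xi> *\<^sub>R m 0 \<sigma>" using t0 t1 by (simp add: \<xi>_def)
  have RR: "R 1 \<sigma>s = R 0 \<sigma>" using sig sigs by simp
  have E0: "R 0 \<sigma> ** U = mat 1 + tens (b 0 \<sigma>) (m 0 \<sigma>)" using sols sig(1) by auto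
  have "R 1 \<sigma>s ** (U + tens aII nII) = mat 1 + tens (b 1 \<sigma>s) (m 1 \<sigma>s)" using sols sigs(1)
    by (metis insertCI of_nat_1 scaleR_one)
  then have E1: "R 0 \<sigma> ** (U + tens aII nII) = mat 1 + tens (\<xi> *\<^sub>R b 1 \<sigma>s) (m 0 \<sigma>)"
    using RR m1 by (simp add: tens_scale1 tens_scale2)
  have EF: "R 0 \<sigma> ** (U + f *\<^sub>R tens aII nII)
                = mat 1 + tens ((f * \<xi>) *\<^sub>R b 1 \<sigma>s + (1 - f) *\<^sub>R b 0 \<sigma>) (m 0 \<sigma>)" for f
  proof -
    have T: "R 0 \<sigma> ** tens aII nII = tens (\<xi> *\<^sub>R b 1 \<sigma>s) (m 0 \<sigma>) - tens (b 0 \<sigma>) (m 0 \<sigma>)"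
      using E0 E1 unfolding mul_add by (simp add: algebra_simps)
    show ?thesis unfolding mul_add_scale E0 T by (simp add: vsimps algebra_simps)
  qed
  have "nII = (k / t0) *\<^sub>R m 0 \<sigma>" using pq(3) t0 by simp
  moreover have "k / t0 \<noteq> 0" using pq(4) t0 by simp
  ultimately show ?thesis using sig(1) sigs(1) xi RR m1 E0 E1 EF by blast
qed

end
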